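(* If $n$ is a positive integer, then $$\sum_{k = 1}^n \sum_{j = 0}^{k - 1} ( - 1)^{n - j} \frac{( n - j - 1)!}{n - j + 1}\left\{ {n \atop n - j} \right\} = B_n .$$
   Context: $\left\{ {n \atop m} \right\}$ denotes the Stirling number of the second kind. $B_n$ are the Bernoulli numbers, defined by $\frac{t}{e^t-1}=\sum_{n\ge0}B_n\frac{t^n}{n!}$ (so $B_1=-1/2$). *)

theory Defs
  imports "HOL-Combinatorics.Stirling" "HOL-Computational_Algebra.Formal_Power_Series"
begin

text \<open>Bernoulli numbers via their exponential generating function
  t / (e^t - 1) = sum_n B_n t^n / n!, taken as a formal power series over the reals
  (so B_1 = -1/2).\<close>

definition bernoulli_gf :: "real fps" where
  "bernoulli_gf = fps_X / (fps_exp 1 - 1)"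

definition bernoulli :: "nat \<Rightarrow> real" where
  "bernoulli n = fact n * fps_nth bernoulli_gf n"

end

theory Submission imports Defs begin

unbundle fps_syntax

definition UU :: "real fps" where "UU = fps_exp 1 - 1"

lemma UU_deriv: "fps_deriv UU = 1 + UU"
  by (simp add: UU_def)

lemma UU_pow_nth: "(UU ^ m) $ n = fact m * real (Stirling n m) / fact n"
proof (induction n arbitrary: m)
  case 0
  then show ?case by (cases m) (simp_all add: fps_nth_power_0 UU_def)
next
  case (Suc n)
  show ?case
  proof (cases m)
    case 0
    then show ?thesis by simp
  next
    case (Suc k)
    have d: "fps_deriv (UU ^ Suc k) = of_nat (Suc k) * (UU ^ k + UU ^ Suc k)"
    proof -
      have "fps_deriv (UU ^ Suc k) = of_nat (Suc k) * fps_deriv UU * UU ^ (Suc k - 1)"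
        by (rule fps_deriv_power')
      also have "\<dots> = of_nat (Suc k) * (1 + UU) * UU ^ k" by (simp add: UU_deriv)
      finally show ?thesis by (simp add: algebra_simps)
    qed
    have "of_nat (n+1) * (UU ^ Suc k) $ (Suc n) = fps_deriv (UU ^ Suc k) $ n"
      by (simp only: fps_deriv_nth Suc_eq_plus1)
    also have "\<dots> = of_nat (Suc k) * ((UU ^ k) $ n + (UU ^ Suc k) $ n)"
      unfolding d by (simp add: fps_of_nat[symmetric])
    finally have e: "real (n+1) * (UU ^ Suc k) $ (Suc n) = real (Suc k) * ((UU ^ k) $ n + (UU ^ Suc k) $ n)" by simp
    have "(UU ^ Suc k) $ (Suc n) = real (Suc k) * ((UU ^ k) $ n + (UU ^ Suc k) $ n) / real (n+1)"
      using e by (simp add: field_simps)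
    also have "\<dots> = fact (Suc k) * real (Stirling (Suc n) (Suc k)) / fact (Suc n)"
      unfolding Suc.IH[of k] Suc.IH[of "Suc k"] by (simp add: field_simps)
    finally show ?thesis using Suc by simp
  qed
qed

definition VV :: "real fps" where "VV = fps_shift 1 UU"

lemma UU_eq: "UU = fps_X * VV"
  by (rule fps_ext) (simp add: VV_def UU_def)

lemma VV0: "VV $ 0 = 1"
  by (simp add: VV_def UU_def)

lemma UU_nz: "UU \<noteq> 0"
proof
  assume "UU = 0"
  then have "UU $ 1 = 0" by simp
  then show False by (simp add: UU_def)
qed

lemma bgf: "bernoulli_gf = inverse VV"
proof -
  have "fps_X = inverse VV * UU"
    using inverse_mult_eq_1[of VV] VV0 by (simp add: UU_eq mult.assoc[symmetric])
  then have "fps_X / UU = (inverse VV * UU) / UU" by simp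
  also have "\<dots> = inverse VV" by (rule fps_divide_times_eq[OF UU_nz])
  finally show ?thesis
    unfolding bernoulli_gf_def UU_def[symmetric] .
qed

definition GG :: "nat \<Rightarrow> real fps" where
  "GG N = (\<Sum>m\<le>N. fps_const ((-1)^m / real (m+1)) * UU^m)"

lemma GG_UU_deriv: "fps_deriv (GG N * UU) = 1 - (- UU) ^ Suc N"
proof -
  have "GG N * UU = (\<Sum>m\<le>N. fps_const ((-1)^m / real (m+1)) * UU^Suc m)"
    unfolding GG_def sum_distrib_right by (simp add: algebra_simps)
  then have "fps_deriv (GG N * UU) = (\<Sum>m\<le>N. fps_const ((-1)^m / real (m+1)) * fps_deriv (UU^Suc m))"
    by (simp add: fps_deriv_sum)
  also have "\<dots> = (\<Sum>m\<le>N. (- UU)^m * (1 + UU))"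
  proof (rule sum.cong)
    fix m assume "m \<in> {..N}"
    have "fps_deriv (UU^Suc m) = of_nat (Suc m) * fps_deriv UU * UU ^ (Suc m - 1)"
      by (rule fps_deriv_power')
    also have "\<dots> = fps_const (real (Suc m)) * (1 + UU) * UU ^ m"
      by (simp only: UU_deriv fps_of_nat of_nat_id diff_Suc_1)
    finally have "fps_const ((-1)^m / real (m+1)) * fps_deriv (UU^Suc m)
       = (fps_const ((-1)^m / real (m+1)) * fps_const (real (Suc m))) * (1 + UU) * UU ^ m"
      by (simp add: mult.assoc)
    also have "fps_const ((-1)^m / real (m+1)) * fps_const (real (Suc m)) = fps_const ((-1)^m)"
      unfolding fps_const_mult by simp
    also have "fps_const ((-1)^m) * (1 + UU) * UU ^ m = (- UU)^m * (1 + UU)"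
    proof -
      have a: "(- UU)^m = (-1)^m * UU^m" by (rule power_minus)
      have b: "fps_const ((-1::real)^m) = (-1)^m" by (simp add: fps_const_power[symmetric] fps_const_neg[symmetric])
      show ?thesis unfolding a b by (simp add: algebra_simps)
    qed
    finally show "fps_const ((-1)^m / real (m+1)) * fps_deriv (UU^Suc m) = (- UU)^m * (1 + UU)" .
  qed simp
  also have "\<dots> = (\<Sum>m\<le>N. (- UU)^m) * (1 + UU)"
    by (simp add: sum_distrib_right)
  also have "\<dots> = (1 - (- UU)) * (\<Sum>m<Suc N. (- UU)^m)"
    by (subst mult.commute) (simp add: lessThan_Suc_atMost)
  also have "\<dots> = 1 - (- UU) ^ Suc N"
    by (rule one_diff_power_eq[symmetric])
  finally show ?thesis .
qed

lemma GG_VV_nth: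
  assumes "k \<le> N"
  shows "(GG N * VV) $ k = (if k = 0 then 1 else 0)"
proof -
  have "(GG N * VV) $ k = (fps_X * (GG N * VV)) $ Suc k" by simp
  also have "\<dots> = (GG N * UU) $ Suc k" by (simp add: UU_eq algebra_simps)
  finally have e: "real (Suc k) * (GG N * VV) $ k = fps_deriv (GG N * UU) $ k"
    by (simp only: fps_deriv_nth Suc_eq_plus1)
  have a: "(- UU)^Suc N = fps_const ((-1)^Suc N) * UU^Suc N"
  proof -
    have a: "(- UU)^Suc N = (-1)^Suc N * UU^Suc N" by (rule power_minus)
    have b: "fps_const ((-1::real)^Suc N) = (-1)^Suc N" by (simp only: fps_const_power[symmetric] fps_const_neg[symmetric] fps_const_1_eq_1)
    show ?thesis unfolding a b ..
  qed
  have "((- UU) ^ Suc N) $ k = 0"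
    unfolding a fps_mult_left_const_nth UU_pow_nth using assms by simp
  then have g: "fps_deriv (GG N * UU) $ k = (if k = 0 then 1 else 0)"
    unfolding GG_UU_deriv by simp
  from e g have f: "real (Suc k) * (GG N * VV) $ k = (if k = 0 then 1 else 0)" by (rule trans)
  show ?thesis
  proof (cases "k = 0")
    case True
    then show ?thesis using f by simp
  next
    case False
    then have "real (Suc k) * (GG N * VV) $ k = 0" using f by simp
    then show ?thesis using False by (simp del: of_nat_Suc)
  qed
qed

lemma GG_nth: "(GG n) $ n = bernoulli_gf $ n"
proof -
  have "(GG n * VV * inverse VV) $ n = (1 * inverse VV) $ n"
    unfolding fps_mult_nth[of "GG n * VV"] fps_mult_nth[of 1]
    by (rule sum.cong) (auto simp: GG_VV_nth simp del: fps_mult_nth)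
  then show ?thesis
    using inverse_mult_eq_1'[of VV] VV0 by (simp add: bgf mult.assoc)
qed

lemma bernoulli_formula:
  "bernoulli n = (\<Sum>m\<le>n. (-1)^m * fact m / real (m+1) * real (Stirling n m))"
proof -
  have "bernoulli n = fact n * (GG n) $ n"
    by (simp add: bernoulli_def GG_nth)
  also have "\<dots> = (\<Sum>m\<le>n. (-1)^m * fact m / real (m+1) * real (Stirling n m))"
    unfolding GG_def fps_sum_nth sum_distrib_left
    by (rule sum.cong) (simp_all add: UU_pow_nth)
  finally show ?thesis .
qed


lemma double_sum_swap:
  fixes a :: "nat \<Rightarrow> real"
  shows "(\<Sum>k = 1..n. \<Sum>j = 0..k - 1. a j) = (\<Sum>j<n. real (n - j) * a j)"
proof (induction n)
  case 0
  then show ?case by simp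
next
  case (Suc n)
  have "(\<Sum>k = 1..Suc n. \<Sum>j = 0..k - 1. a j) = (\<Sum>k = 1..n. \<Sum>j = 0..k - 1. a j) + (\<Sum>j = 0..n. a j)"
    by simp
  also have "\<dots> = (\<Sum>j<n. real (n - j) * a j) + (\<Sum>j<Suc n. a j)"
    using Suc.IH atLeast0AtMost lessThan_Suc_atMost by simp
  also have "\<dots> = (\<Sum>j<Suc n. real (Suc n - j) * a j)"
  proof -
    have "(\<Sum>j<Suc n. real (Suc n - j) * a j) = (\<Sum>j<n. real (Suc n - j) * a j) + a n" by simp
    also have "(\<Sum>j<n. real (Suc n - j) * a j) = (\<Sum>j<n. real (n - j) * a j + a j)"
      by (rule sum.cong) (auto simp: Suc_diff_le algebra_simps)
    finally show ?thesis by (simp add: sum.distrib)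
  qed
  finally show ?case .
qed

lemma sum_rev_index:
  fixes f :: "nat \<Rightarrow> real"
  shows "(\<Sum>j<n. f (n - j)) = (\<Sum>m = 1..n. f m)"
  by (rule sum.reindex_bij_witness[where i="\<lambda>m. n - m" and j="\<lambda>j. n - j"]) auto

theorem proposition6:
  fixes n :: nat
  assumes "n \<ge> 1"
  shows "(\<Sum>k = 1..n. \<Sum>j = 0..k - 1.
            (-1) ^ (n - j) * fact (n - j - 1) / real (n - j + 1) * real (Stirling n (n - j)))
         = bernoulli n"
proof -
  define g where "g m = (-1) ^ m * fact m / real (m + 1) * real (Stirling n m)" for m
  have "(\<Sum>k = 1..n. \<Sum>j = 0..k - 1.
            (-1) ^ (n - j) * fact (n - j - 1) / real (n - j + 1) * real (Stirling n (n - j)))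
      = (\<Sum>j<n. real (n - j) * ((-1) ^ (n - j) * fact (n - j - 1) / real (n - j + 1) * real (Stirling n (n - j))))"
    by (rule double_sum_swap)
  also have "\<dots> = (\<Sum>j<n. g (n - j))"
  proof (rule sum.cong[OF refl])
    fix j assume "j \<in> {..<n}"
    then obtain p where p: "n - j = Suc p" by (metis lessThan_iff zero_less_diff not0_implies_Suc neq0_conv)
    show "real (n - j) * ((-1) ^ (n - j) * fact (n - j - 1) / real (n - j + 1) * real (Stirling n (n - j))) = g (n - j)"
      unfolding p g_def by (simp add: field_simps)
  qed
  also have "\<dots> = (\<Sum>m = 1..n. g m)" by (rule sum_rev_index)
  also have "\<dots> = (\<Sum>m\<le>n. g m)"
  proof -
    have "(\<Sum>m\<le>n. g m) = g 0 + (\<Sum>m = 1..n. g m)"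
      by (simp add: atMost_atLeast0 sum.atLeast_Suc_atMost)
    moreover have "g 0 = 0" using assms by (cases n) (simp_all add: g_def)
    ultimately show ?thesis by simp
  qed
  also have "\<dots> = bernoulli n" unfolding g_def by (rule bernoulli_formula[symmetric])
  finally show ?thesis .
qed

end
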